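(* Let $n$ be odd, $k\ge3$, and let $f(x)=a_0(x)+2a_1(x)+\cdots+2^{k-1}a_{k-1}(x)$ from $\mathbb{V}_n$ to $\mathbb{Z}_{2^k}$ be gbent. Then its generalized Gray map $\psi(f):\mathbb{V}_n\times\mathbb{F}_2^{k-1}\to\mathbb{F}_2$, $\psi(f)(x,y_0,\ldots,y_{k-2})=\bigoplus_{i=0}^{k-2}a_i(x)y_i\oplus a_{k-1}(x)$, is $(k-2)$-plateaued, i.e. $\mathcal{W}_{\psi(f)}(w)\in\{0,\pm2^{\frac{n+1}{2}+k-2}\}$ for all $w\in\mathbb{V}_n\times\mathbb{F}_2^{k-1}$.
   Context: $\mathbb{V}_n$ is an $n$-dimensional $\mathbb{F}_2$-vector space with inner product $u\cdot x$; on $\mathbb{V}_n\times\mathbb{F}_2^{k-1}$ use the inner product $(u,z)\cdot(x,y)=u\cdot x\oplus z\cdot y$. $\mathcal{W}_F(w)=\sum_v(-1)^{F(v)\oplus w\cdot v}$. A Boolean function in $N$ variables is $s$-plateaued if its Walsh values lie in $\{0,\pm2^{(N+s)/2}\}$. $f$ is gbent if $|\sum_x\zeta_{2^k}^{f(x)}(-1)^{u\cdot x}|=2^{n/2}$ for all $u$, $\zeta_{2^k}=e^{2\pi i/2^k}$. *)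

theory Defs
  imports "HOL-Analysis.Analysis"
begin

definition vecs :: "nat \<Rightarrow> bool list set" where
  "vecs N = {xs. length xs = N}"

definition ip :: "bool list \<Rightarrow> bool list \<Rightarrow> bool" where
  "ip u x = odd (\<Sum>i<length u. (if u ! i \<and> x ! i then 1 else 0 :: nat))"

definition walsh :: "nat \<Rightarrow> (bool list \<Rightarrow> bool) \<Rightarrow> bool list \<Rightarrow> int" where
  "walsh N F w = (\<Sum>v\<in>vecs N. (-1::int) ^ (if F v \<noteq> ip w v then 1 else 0))"

definition plateaued :: "nat \<Rightarrow> nat \<Rightarrow> (bool list \<Rightarrow> bool) \<Rightarrow> bool" where
  "plateaued N s F \<longleftrightarrow> (\<forall>w\<in>vecs N. real_of_int (walsh N F w) \<in>
      {0, 2 powr ((real N + real s) / 2), - (2 powr ((real N + real s) / 2))})"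

text \<open>Generalized bent: f : V_n \<rightarrow> Z_{2^k} (values taken as naturals below 2^k).\<close>
definition gbent :: "nat \<Rightarrow> nat \<Rightarrow> (bool list \<Rightarrow> nat) \<Rightarrow> bool" where
  "gbent n k f \<longleftrightarrow> (\<forall>u\<in>vecs n.
     cmod (\<Sum>x\<in>vecs n. (cis (2 * pi / 2 ^ k)) ^ (f x) * (-1) ^ (if ip u x then 1 else 0))
       = 2 powr (real n / 2))"

definition digit :: "(bool list \<Rightarrow> nat) \<Rightarrow> nat \<Rightarrow> bool list \<Rightarrow> bool" where
  "digit f i x = odd (f x div 2 ^ i)"

text \<open>Generalized Gray map psi(f) on V_n x F_2^(k-1), where a pair (x,y) is represented by the
  concatenation x @ y (so the product inner product is the standard one on length n+k-1 lists).\<close>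
definition gray :: "nat \<Rightarrow> nat \<Rightarrow> (bool list \<Rightarrow> nat) \<Rightarrow> bool list \<Rightarrow> bool" where
  "gray n k f v = (odd (\<Sum>i<k - 1. (if digit f i (take n v) \<and> v ! (n + i) then 1 else 0 :: nat))
                    \<noteq> digit f (k - 1) (take n v))"

end

theory Submission
  imports Defs "HOL-Computational_Algebra.Polynomial_Factorial"
begin

lemma shift_pow:
  "\<exists>T. [:-1,1::int:]^(2^i) = monom 1 (2^i) + 1 + (T + T)"
proof (induction i)
  case 0
  have "[:-1,1::int:] = [:0,1:] + [:1:] + ([:-1:] + [:-1:])" by simp
  thus ?case by (intro exI[of _ "[:-1:]"]) (simp add: monom_Suc one_pCons)
next
  case (Suc i)
  then obtain T where T: "[:-1,1::int:]^(2^i) = monom 1 (2^i) + 1 + (T + T)" by blast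
  let ?X = "monom (1::int) (2^i)"
  have X2: "?X * ?X = monom 1 (2^Suc i)" by (simp add: mult_monom mult_2)
  have "[:-1,1::int:]^(2^Suc i) = ([:-1,1::int:]^(2^i)) * ([:-1,1::int:]^(2^i))"
    by (metis power_add power_Suc mult_2)
  also have "\<dots> = (?X + 1 + (T + T)) * (?X + 1 + (T + T))" by (simp add: T)
  also have "\<dots> = ?X * ?X + 1 + ((?X + (T+T)*(?X+1) + (T+T)*T) + (?X + (T+T)*(?X+1) + (T+T)*T))"
    by (simp add: algebra_simps)
  finally show ?case unfolding X2 by blast
qed

lemma eis_aux:
  fixes G H E :: "int poly"
  assumes GH: "G * H = E"
    and mid: "\<And>i. 0 < i \<Longrightarrow> i < degree E \<Longrightarrow> even (coeff E i)"
    and dG: "degree G \<ge> 1" and dH: "degree H \<ge> 1"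
    and lc: "lead_coeff E = 1"
    and G0: "even (coeff G 0)" and H0: "odd (coeff H 0)"
  shows False
proof -
  have G: "G \<noteq> 0" and H: "H \<noteq> 0" using dG dH by auto
  have degE: "degree E = degree G + degree H" using GH degree_mult_eq[OF G H] by simp
  have "lead_coeff G * lead_coeff H = 1" using GH lc lead_coeff_mult[of G H] by simp
  hence oddG: "odd (lead_coeff G)" by (metis even_mult_iff odd_one)
  define r where "r = (LEAST i. odd (coeff G i))"
  have rodd: "odd (coeff G r)" unfolding r_def by (rule LeastI[of _ "degree G"]) (use oddG in auto)
  have rle: "r \<le> degree G" unfolding r_def by (rule Least_le) (use oddG in auto)
  have rpos: "0 < r" using rodd G0 by (cases r) auto
  have below: "\<And>i. i < r \<Longrightarrow> even (coeff G i)" unfolding r_def using not_less_Least by blast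
  have rlt: "r < degree E" using rle degE dH by linarith
  have "coeff E r = (\<Sum>i\<le>r. coeff G i * coeff H (r - i))" by (simp only: GH[symmetric] coeff_mult)
  also have "\<dots> = (\<Sum>i<r. coeff G i * coeff H (r - i)) + coeff G r * coeff H 0"
    by (simp add: lessThan_Suc_atMost[symmetric])
  finally have eq: "coeff E r = (\<Sum>i<r. coeff G i * coeff H (r - i)) + coeff G r * coeff H 0" .
  have "even (\<Sum>i<r. coeff G i * coeff H (r - i))"
    by (rule dvd_sum) (use below in auto)
  moreover have "odd (coeff G r * coeff H 0)" using rodd H0 by simp
  ultimately have "odd (coeff E r)" using eq by simp
  with mid[OF rpos rlt] show False by simp
qed

lemma eis:
  fixes G H E :: "int poly"
  assumes GH: "G * H = E"
    and mid: "\<And>i. 0 < i \<Longrightarrow> i < degree E \<Longrightarrow> even (coeff E i)"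
    and dG: "degree G \<ge> 1" and dH: "degree H \<ge> 1"
    and lc: "lead_coeff E = 1" and c0: "coeff E 0 = 2"
  shows False
proof -
  have "coeff (G*H) 0 = coeff G 0 * coeff H 0" by (simp add: coeff_mult)
  hence "coeff G 0 * coeff H 0 = 2" using GH c0 by simp
  hence "(even (coeff G 0) \<and> odd (coeff H 0)) \<or> (even (coeff H 0) \<and> odd (coeff G 0))"
  proof -
    assume a: "coeff G 0 * coeff H 0 = 2"
    have "\<not> (even (coeff G 0) \<and> even (coeff H 0))"
    proof
      assume "even (coeff G 0) \<and> even (coeff H 0)"
      then obtain a b where "coeff G 0 = 2*a" "coeff H 0 = 2*b" by (auto elim!: evenE)
      with \<open>coeff G 0 * coeff H 0 = 2\<close> have "4 * (a*b) = 2" by (simp add: algebra_simps)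
      thus False by presburger
    qed
    moreover have "\<not> (odd (coeff G 0) \<and> odd (coeff H 0))" using a
      by (metis even_mult_iff even_numeral)
    ultimately show ?thesis by blast
  qed
  thus False
  proof
    assume "even (coeff G 0) \<and> odd (coeff H 0)"
    thus False using eis_aux[OF GH mid dG dH lc] by blast
  next
    assume "even (coeff H 0) \<and> odd (coeff G 0)"
    thus False using eis_aux[of H G E] GH mid dG dH lc by (auto simp: mult.commute)
  qed
qed

lemma pcompose_power: "pcompose (p ^ n) q = (pcompose p q) ^ n"
  by (induction n) (simp_all add: pcompose_1 pcompose_mult)

lemma monom_x_pow: "monom (1::'a::comm_semiring_1) n = [:0,1:] ^ n"
  by (induction n) (simp_all add: monom_Suc monom_0)

lemma pcompose_x: "pcompose [:0,1:] (q::'a::comm_ring_1 poly) = q"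
  by (simp add: pcompose_pCons smult_1_left)

lemma irred_D:
  fixes j :: nat assumes j: "1 \<le> j"
  shows "irreducible (monom (1::int) (2^j) + 1)"
proof -
  define M where "M = (2::nat)^j"
  have Mpos: "M \<ge> 2" unfolding M_def
    using power_increasing[OF j, of "2::nat"] by simp
  have Meven: "even M" unfolding M_def using j by (simp add: Suc_le_eq)
  define D where "D = monom (1::int) M + 1"
  have degD: "degree D = M" unfolding D_def using Mpos by (simp add: degree_add_eq_left degree_monom_eq)
  define E where "E = pcompose D [:-1,1:]"
  have E_eq: "E = [:-1,1:]^M + 1"
    unfolding E_def D_def by (simp add: pcompose_add pcompose_1 monom_x_pow pcompose_power pcompose_x)
  obtain T where T: "[:-1,1::int:]^M = monom 1 M + 1 + (T + T)" using shift_pow[of j] unfolding M_def by blast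
  have degP: "degree ([:-1,1::int:]^M) = M" by (simp add: degree_power_eq)
  have lcP: "lead_coeff ([:-1,1::int:]^M) = 1" by (simp add: lead_coeff_power)
  have degE: "degree E = M" unfolding E_eq using degP Mpos by (simp add: degree_add_eq_left)
  have lcE: "lead_coeff E = 1" using degE unfolding E_eq using lcP degP Mpos by simp
  have c0E: "coeff E 0 = 2" unfolding E_eq using Meven
    by (simp add: poly_0_coeff_0[symmetric])
  have midE: "even (coeff E i)" if "0 < i" "i < degree E" for i
  proof -
    have "coeff E i = coeff (monom 1 M) i + coeff 1 i + (coeff T i + coeff T i) + coeff 1 i"
      unfolding E_eq T by (simp only: coeff_add)
    also have "\<dots> = coeff T i + coeff T i" using that degE by (simp add: coeff_monom coeff_1)
    finally have "coeff E i = coeff T i + coeff T i" .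
    thus ?thesis by simp
  qed
  have lcD: "lead_coeff D = 1" using degD Mpos unfolding D_def by (simp add: coeff_1)
  have "irreducible D"
  proof (rule irreducibleI)
    show "D \<noteq> 0" using degD Mpos by auto
    show "\<not> is_unit D" using degD Mpos by (auto simp: is_unit_poly_iff)
    fix a b assume ab: "D = a * b"
    have a0: "a \<noteq> 0" and b0: "b \<noteq> 0" using ab \<open>D \<noteq> 0\<close> by auto
    have dab: "degree a + degree b = M" using ab a0 b0 degD by (simp add: degree_mult_eq)
    have lab: "lead_coeff a * lead_coeff b = 1" using ab lcD lead_coeff_mult[of a b] by simp
    have Eab: "pcompose a [:-1,1:] * pcompose b [:-1,1:] = E" unfolding E_def ab by (simp add: pcompose_mult)
    have da: "degree (pcompose a [:-1,1::int:]) = degree a" by (simp add: degree_pcompose)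
    have db: "degree (pcompose b [:-1,1::int:]) = degree b" by (simp add: degree_pcompose)
    show "is_unit a \<or> is_unit b"
    proof (cases "degree a = 0")
      case True
      then obtain c where "a = [:c:]" by (metis degree_eq_zeroE)
      with lab have "c * lead_coeff b = 1" by simp
      hence "c dvd 1" by (metis dvd_triv_left)
      thus ?thesis using \<open>a = [:c:]\<close> by (auto simp: is_unit_poly_iff)
    next
      case False
      show ?thesis
      proof (cases "degree b = 0")
        case True
        then obtain c where "b = [:c:]" by (metis degree_eq_zeroE)
        with lab have "lead_coeff a * c = 1" by simp
        hence "c dvd 1" by (metis dvd_triv_right)
        thus ?thesis using \<open>b = [:c:]\<close> by (auto simp: is_unit_poly_iff)
      next
        case False2: False
        have False using eis[OF Eab midE] da db False False2 lcE c0E by auto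
        thus ?thesis ..
      qed
    qed
  qed
  thus ?thesis unfolding D_def M_def .
qed

definition evz :: "complex \<Rightarrow> int poly \<Rightarrow> complex" where
  "evz z A = poly (map_poly of_int A) z"

lemma mp_add: "map_poly (of_int::int\<Rightarrow>complex) (A + B) = map_poly of_int A + map_poly of_int B"
  by (rule poly_eqI) (simp add: coeff_map_poly)
lemma mp_diff: "map_poly (of_int::int\<Rightarrow>complex) (A - B) = map_poly of_int A - map_poly of_int B"
  by (rule poly_eqI) (simp add: coeff_map_poly)
lemma mp_minus: "map_poly (of_int::int\<Rightarrow>complex) (- A) = - map_poly of_int A"
  by (rule poly_eqI) (simp add: coeff_map_poly)
lemma mp_mult: "map_poly (of_int::int\<Rightarrow>complex) (A * B) = map_poly of_int A * map_poly of_int B"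
  by (rule poly_eqI) (simp add: coeff_map_poly coeff_mult)

lemma evz_add [simp]: "evz z (A + B) = evz z A + evz z B"
  by (simp add: evz_def mp_add)
lemma evz_diff [simp]: "evz z (A - B) = evz z A - evz z B"
  by (simp add: evz_def mp_diff)
lemma evz_minus [simp]: "evz z (- A) = - evz z A"
  by (simp add: evz_def mp_minus)
lemma evz_mult [simp]: "evz z (A * B) = evz z A * evz z B"
  by (simp add: evz_def mp_mult)
lemma evz_const [simp]: "evz z [:c:] = of_int c"
  by (cases "c = 0") (simp_all add: evz_def map_poly_pCons)
lemma evz_1 [simp]: "evz z 1 = 1"
  by (simp add: evz_def)
lemma evz_0 [simp]: "evz z 0 = 0"
  by (simp add: evz_def)
lemma evz_monom [simp]: "evz z (monom c n) = of_int c * z ^ n"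
  by (simp add: evz_def map_poly_monom poly_monom)
lemma evz_power [simp]: "evz z (A ^ n) = evz z A ^ n"
  by (induction n) simp_all
lemma evz_smult [simp]: "evz z (smult c A) = of_int c * evz z A"
  by (simp add: evz_def map_poly_smult)
lemma evz_sum: "evz z (sum f S) = (\<Sum>i\<in>S. evz z (f i))"
  by (induction S rule: infinite_finite_induct) simp_all
lemma evz_pCons: "evz z (pCons a p) = of_int a + z * evz z p"
  by (simp add: evz_def map_poly_pCons)
lemma evz_x [simp]: "evz z [:a,b:] = of_int a + z * of_int b"
  by (simp add: evz_pCons)

lemma evz_pcompose: "evz z (pcompose A q) = evz (evz z q) A"
  by (induction A) (simp_all add: pcompose_pCons evz_pCons)

lemma evz_cnj: "cnj (evz z A) = evz (cnj z) A"
proof -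
  have "map_poly cnj (map_poly (of_int::int\<Rightarrow>complex) A) = map_poly of_int A"
    by (rule poly_eqI) (simp add: coeff_map_poly)
  thus ?thesis by (simp add: evz_def poly_cnj)
qed

lemma evz_real_1: "evz 1 A = of_int (poly A 1)"
proof (induction A)
  case 0 then show ?case by simp
next
  case (pCons a p) then show ?case by (simp add: evz_pCons)
qed

locale cyc =
  fixes j :: nat
  assumes j1: "1 \<le> j"
begin

definition MM :: nat where "MM = 2^j"
definition DD :: "int poly" where "DD = monom 1 MM + 1"
definition zeta :: complex where "zeta = cis (pi / MM)"
abbreviation ev :: "int poly \<Rightarrow> complex" where "ev \<equiv> evz zeta"

lemma MM_ge2: "MM \<ge> 2" unfolding MM_def using power_increasing[OF j1, of "2::nat"] by simp
lemma MM_even: "even MM" unfolding MM_def using j1 by (simp add: Suc_le_eq)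
lemma degDD: "degree DD = MM" unfolding DD_def using MM_ge2 by (simp add: degree_add_eq_left degree_monom_eq)
lemma lcDD: "lead_coeff DD = 1" using degDD MM_ge2 unfolding DD_def by (simp add: coeff_1)
lemma DD_nz: "DD \<noteq> 0" using degDD MM_ge2 by auto
lemma prime_DD: "prime_elem DD"
  unfolding DD_def MM_def using irred_D[OF j1] by (simp add: irreducible_imp_prime_elem)

lemma zeta_pow_MM: "zeta ^ MM = -1"
proof -
  have "zeta ^ MM = cis (real MM * (pi / MM))" unfolding zeta_def by (simp only: Complex.DeMoivre)
  also have "real MM * (pi / MM) = pi" using MM_ge2 by simp
  finally show ?thesis by simp
qed
lemma zeta_pow_2MM: "zeta ^ (2*MM) = 1"
proof -
  have "zeta^(2*MM) = (zeta^MM)^2" by (simp add: power_mult[symmetric] mult.commute)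
  thus ?thesis by (simp add: zeta_pow_MM)
qed
lemma zeta_nz: "zeta \<noteq> 0" unfolding zeta_def by simp
lemma zeta_ne1: "zeta \<noteq> 1" using zeta_pow_MM by auto
lemma cnj_zeta: "cnj zeta = zeta ^ (2*MM - 1)"
proof -
  have s: "Suc (2*MM-1) = 2*MM" using MM_ge2 by simp
  have "zeta ^ (2*MM - 1) * zeta = 1" using zeta_pow_2MM s by (metis power_Suc2)
  hence "zeta ^ (2*MM - 1) = inverse zeta" using zeta_nz by (simp add: field_simps)
  also have "inverse zeta = cnj zeta" unfolding zeta_def by (simp add: cis_cnj)
  finally show ?thesis by simp
qed

lemma ev_DD: "ev DD = 0" unfolding DD_def using zeta_pow_MM by simp

lemma evz_DD_odd: "odd l \<Longrightarrow> evz (zeta ^ l) DD = 0"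
proof -
  assume l: "odd l"
  have "(zeta ^ l) ^ MM = (zeta ^ MM) ^ l" by (simp add: power_mult[symmetric] mult.commute)
  thus ?thesis unfolding DD_def using zeta_pow_MM l by simp
qed

lemma no_small:
  assumes T: "T \<noteq> 0" and evT: "ev T = 0"
  shows "MM \<le> degree T"
proof (rule ccontr)
  assume small0: "\<not> MM \<le> degree T"
  define d where "d = (LEAST d. \<exists>T. T \<noteq> 0 \<and> ev T = 0 \<and> degree T = d)"
  have ex: "\<exists>d T. T \<noteq> 0 \<and> ev T = 0 \<and> degree T = d" using T evT by blast
  obtain T0 where T0: "T0 \<noteq> 0" "ev T0 = 0" "degree T0 = d"
    using LeastI_ex[OF ex] unfolding d_def by blast
  have "d \<le> degree T" unfolding d_def by (rule Least_le) (use T evT in blast)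
  hence small: "degree T0 < MM" using small0 T0(3) by simp
  have minimal: "\<not> degree R < d" if R: "R \<noteq> 0" "ev R = 0" for R
  proof
    assume "degree R < d"
    hence "\<not> (\<exists>T. T \<noteq> 0 \<and> ev T = 0 \<and> degree T = degree R)" unfolding d_def by (rule not_less_Least)
    with R show False by blast
  qed
  define r where "r = pseudo_mod DD T0"
  from pseudo_mod(1)[OF T0(1), of DD] obtain a q where a: "a \<noteq> 0"
      and eq0: "smult a DD = T0 * q + pseudo_mod DD T0" by blast
  have eq: "smult a DD = T0 * q + r" using eq0 r_def by simp
  have rdeg: "r = 0 \<or> degree r < degree T0"
    using pseudo_mod(2)[OF T0(1), of DD] unfolding r_def by blast
  have "ev (smult a DD) = 0" using ev_DD by simp
  hence evr: "ev r = 0" using eq T0(2) by simp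
  have r0: "r = 0"
  proof (rule ccontr)
    assume "r \<noteq> 0"
    with rdeg have "degree r < d" using T0(3) by simp
    with minimal[OF \<open>r \<noteq> 0\<close> evr] show False by simp
  qed
  with eq have eq2: "smult a DD = T0 * q" by simp
  have "DD dvd T0 * q" unfolding eq2[symmetric] by (simp add: dvd_smult)
  hence "DD dvd T0 \<or> DD dvd q" using prime_DD by (simp add: prime_elem_dvd_mult_iff)
  thus False
  proof
    assume "DD dvd T0"
    hence "degree DD \<le> degree T0" using T0(1) by (rule dvd_imp_degree_le)
    with small degDD show False by simp
  next
    assume "DD dvd q"
    then obtain q' where q': "q = DD * q'" by (auto elim!: dvdE)
    have "[:a:] * DD = (T0 * q') * DD" using eq2 q' by (simp add: algebra_simps)
    hence aq: "[:a:] = T0 * q'" using DD_nz by (metis mult_cancel_right)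
    hence "degree (T0 * q') = 0" by (metis degree_pCons_0)
    moreover have "q' \<noteq> 0" using aq a by auto
    ultimately have "degree T0 = 0" using T0(1) by (simp add: degree_mult_eq)
    then obtain c where c: "T0 = [:c:]" by (metis degree_eq_zeroE)
    with T0 have "c \<noteq> 0" "of_int c = (0::complex)" by auto
    thus False by simp
  qed
qed

lemma transfer: "ev W = 0 \<Longrightarrow> DD dvd W"
proof -
  assume W: "ev W = 0"
  define r where "r = pseudo_mod W DD"
  from pseudo_mod(1)[OF DD_nz, of W] obtain a q where a: "a \<noteq> 0" and eq0: "smult a W = DD * q + pseudo_mod W DD"
    by blast
  have eq: "smult a W = DD * q + r" using eq0 r_def by simp
  have rdeg: "r = 0 \<or> degree r < degree DD"
    using pseudo_mod(2)[OF DD_nz, of W] unfolding r_def by blast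
  have "ev (smult a W) = 0" using W by simp
  hence evr: "ev r = 0" using eq ev_DD by simp
  have "r = 0"
  proof (rule ccontr)
    assume "r \<noteq> 0"
    hence "MM \<le> degree r" using no_small[OF _ evr] by blast
    moreover have "degree r < MM" using rdeg \<open>r \<noteq> 0\<close> degDD by simp
    ultimately show False by simp
  qed
  hence "DD dvd smult a W" using eq by simp
  thus ?thesis by (rule dvd_monic[OF lcDD _ a])
qed

lemma galois: "ev W = 0 \<Longrightarrow> odd l \<Longrightarrow> evz (zeta ^ l) W = 0"
proof -
  assume W: "ev W = 0" and l: "odd l"
  obtain Q where "W = DD * Q" using transfer[OF W] by (elim dvdE)
  thus ?thesis using evz_DD_odd[OF l] by simp
qed

lemma reduce: "\<exists>A'. degree A' < MM \<and> ev A' = ev A"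
proof -
  obtain q r where pd: "pseudo_divmod A DD = (q, r)" by (cases "pseudo_divmod A DD") auto
  have eq: "smult (coeff DD (degree DD) ^ (Suc (degree A) - degree DD)) A = DD * q + r"
    using pseudo_divmod(1)[OF DD_nz pd] .
  hence eq': "A = DD * q + r" using lcDD by simp
  have "r = 0 \<or> degree r < degree DD" using pseudo_divmod(2)[OF DD_nz pd] .
  hence "degree r < MM" using degDD MM_ge2 by auto
  moreover have "ev r = ev A" using eq' ev_DD by simp
  ultimately show ?thesis by blast
qed

lemma uniq: "degree A < MM \<Longrightarrow> degree B < MM \<Longrightarrow> ev A = ev B \<Longrightarrow> A = B"
proof (rule ccontr)
  assume a: "degree A < MM" "degree B < MM" "ev A = ev B" "A \<noteq> B"
  have "degree (A - B) \<le> max (degree A) (degree B)" by (rule degree_diff_le_max)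
  hence "degree (A - B) < MM" using a by simp
  moreover have "A - B \<noteq> 0" "ev (A - B) = 0" using a by auto
  ultimately have "MM \<le> degree (A - B)" using no_small by blast
  with \<open>degree (A - B) < MM\<close> show False by simp
qed

end

context cyc
begin

definition inZ :: "complex \<Rightarrow> bool" where "inZ z \<longleftrightarrow> (\<exists>A. z = ev A)"
definition piv :: complex where "piv = 1 - zeta"
definition pdvd :: "complex \<Rightarrow> bool" where "pdvd z \<longleftrightarrow> (\<exists>w. inZ w \<and> z = piv * w)"
definition star :: "int poly \<Rightarrow> int poly" where "star A = pcompose A (monom 1 (2*MM - 1))"

lemma inZ_ev [simp]: "inZ (ev A)" unfolding inZ_def by blast
lemma inZ_add [simp]: "inZ a \<Longrightarrow> inZ b \<Longrightarrow> inZ (a + b)"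
  unfolding inZ_def by (metis evz_add)
lemma inZ_diff [simp]: "inZ a \<Longrightarrow> inZ b \<Longrightarrow> inZ (a - b)"
  unfolding inZ_def by (metis evz_diff)
lemma inZ_mult [simp]: "inZ a \<Longrightarrow> inZ b \<Longrightarrow> inZ (a * b)"
  unfolding inZ_def by (metis evz_mult)
lemma inZ_int [simp]: "inZ (of_int c)"
  unfolding inZ_def by (metis evz_const)
lemma inZ_1 [simp]: "inZ 1" using inZ_int[of 1] by simp
lemma inZ_0 [simp]: "inZ 0" using inZ_int[of 0] by simp
lemma inZ_uminus [simp]: "inZ a \<Longrightarrow> inZ (- a)"
  unfolding inZ_def by (metis evz_minus)
lemma inZ_2 [simp]: "inZ 2" using inZ_int[of 2] by simp
lemma inZ_zeta [simp]: "inZ zeta"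
  unfolding inZ_def by (rule exI[of _ "monom 1 1"]) simp
lemma inZ_piv [simp]: "inZ piv" unfolding piv_def by simp
lemma inZ_power [simp]: "inZ a \<Longrightarrow> inZ (a ^ n)"
  by (induction n) simp_all
lemma inZ_sum: "(\<And>i. i \<in> S \<Longrightarrow> inZ (f i)) \<Longrightarrow> inZ (sum f S)"
  by (induction S rule: infinite_finite_induct) auto

lemma ev_star: "ev (star A) = cnj (ev A)"
  unfolding star_def by (simp add: evz_pcompose evz_cnj cnj_zeta)
lemma poly_star_1: "poly (star A) 1 = poly A 1"
  unfolding star_def by (simp add: poly_pcompose poly_monom)
lemma inZ_cnj [simp]: "inZ a \<Longrightarrow> inZ (cnj a)"
  unfolding inZ_def by (metis ev_star)

lemma two_pi: "2 = piv * ev (\<Sum>l<MM. monom 1 l)"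
proof -
  have e: "ev (\<Sum>l<MM. monom 1 l) = (\<Sum>l<MM. zeta ^ l)" by (simp add: evz_sum)
  have "(2::complex) = 1 - zeta ^ MM" using zeta_pow_MM by simp
  also have "\<dots> = (1 - zeta) * (\<Sum>l<MM. zeta ^ l)" by (rule one_diff_power_eq)
  finally show ?thesis unfolding e piv_def .
qed

lemma pdvd_iff: "pdvd (ev A) \<longleftrightarrow> even (poly A 1)"
proof
  assume "pdvd (ev A)"
  then obtain B where B: "ev A = piv * ev B" unfolding pdvd_def inZ_def by blast
  have e1: "ev [:1,-1:] = piv" unfolding piv_def by simp
  have "ev (A - [:1,-1:] * B) = ev A - ev [:1,-1:] * ev B" by (simp only: evz_diff evz_mult)
  also have "\<dots> = 0" using B e1 by simp
  finally have "ev (A - [:1,-1:] * B) = 0" .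
  from transfer[OF this] obtain Q where Q: "A - [:1,-1:] * B = DD * Q" by (elim dvdE)
  have "poly (A - [:1,-1:] * B) 1 = poly DD 1 * poly Q 1" using Q by simp
  moreover have "poly DD 1 = 2" unfolding DD_def by (simp add: poly_monom)
  ultimately have "poly A 1 = 2 * poly Q 1" by simp
  thus "even (poly A 1)" by simp
next
  assume ev1: "even (poly A 1)"
  then obtain c where c: "poly A 1 = 2 * c" by (auto elim!: evenE)
  have "poly (A - [:poly A 1:]) 1 = 0" by simp
  hence "[:-1,1:] dvd (A - [:poly A 1:])" using poly_eq_0_iff_dvd[of "A - [:poly A 1:]" 1] by simp
  then obtain Q where Q: "A - [:poly A 1:] = [:-1,1:] * Q" by (elim dvdE)
  have "A = [:poly A 1:] + [:-1,1:] * Q" using Q by (simp add: algebra_simps)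
  hence "ev A = ev ([:poly A 1:] + [:-1,1:] * Q)" by (rule arg_cong[where f=ev])
  also have "ev ([:poly A 1:] + [:-1,1:] * Q) = of_int (poly A 1) + (zeta - 1) * ev Q"
    by (simp only: evz_add evz_mult evz_const evz_x) (simp add: algebra_simps)
  finally have "ev A = of_int (poly A 1) + (zeta - 1) * ev Q" .
  also have "\<dots> = 2 * of_int c - piv * ev Q" using c by (simp add: piv_def algebra_simps)
  also have "\<dots> = piv * (of_int c * ev (\<Sum>l<MM. monom 1 l) - ev Q)"
    by (subst two_pi) (simp add: algebra_simps)
  finally show "pdvd (ev A)" unfolding pdvd_def by (intro exI[of _ "of_int c * ev (\<Sum>l<MM. monom 1 l) - ev Q"]) simp
qed

lemma pdvd_mult: "inZ a \<Longrightarrow> inZ b \<Longrightarrow> pdvd (a * b) \<longleftrightarrow> pdvd a \<or> pdvd b"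
proof -
  assume "inZ a" "inZ b"
  then obtain A B where "a = ev A" "b = ev B" unfolding inZ_def by blast
  moreover have "a * b = ev (A * B)" using calculation by simp
  ultimately show ?thesis by (simp only: pdvd_iff) simp
qed

lemma not_pdvd_power: "inZ a \<Longrightarrow> \<not> pdvd a \<Longrightarrow> \<not> pdvd (a ^ n)"
proof (induction n)
  case 0
  have "\<not> pdvd (ev 1)" by (simp only: pdvd_iff) simp
  thus ?case by simp
next
  case (Suc n) thus ?case by (simp add: pdvd_mult)
qed

lemma pi_MM: "\<exists>w. inZ w \<and> piv ^ MM = 2 * w"
proof -
  obtain T where T: "[:-1,1::int:]^(2^j) = monom 1 (2^j) + 1 + (T + T)" using shift_pow[of j] by blast
  have "ev ([:-1,1::int:]^MM) = ev (monom 1 MM + 1 + (T + T))" using T unfolding MM_def by simp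
  also have "\<dots> = zeta ^ MM + 1 + 2 * ev T" by (simp only: evz_add evz_monom evz_1) simp
  finally have "ev ([:-1,1::int:]^MM) = zeta ^ MM + 1 + 2 * ev T" .
  hence "(zeta - 1) ^ MM = 2 * ev T" using zeta_pow_MM by (simp add: mult.commute)
  moreover have "piv ^ MM = (zeta - 1) ^ MM"
  proof -
    have "piv = - (zeta - 1)" unfolding piv_def by simp
    hence "piv ^ MM = (-1) ^ MM * (zeta - 1) ^ MM" by (simp add: power_mult_distrib[symmetric])
    thus ?thesis using MM_even by simp
  qed
  ultimately show ?thesis by auto
qed

lemma pi_dvd_2: "\<exists>w. inZ w \<and> 2 = piv ^ MM * w"
proof -
  have main: "2^i \<le> MM \<Longrightarrow> (\<exists>w. inZ w \<and> 1 - zeta^(2^i) = piv^(2^i) * w) \<and> (\<exists>w. inZ w \<and> 2 = piv^(2^i) * w)" for i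
  proof (induction i)
    case 0
    have "2 = piv * ev (\<Sum>l<MM. monom 1 l)" by (rule two_pi)
    hence a: "2 = piv^(2^0) * ev (\<Sum>l<MM. monom 1 l)" by simp
    have b: "1 - zeta^(2^0) = piv^(2^0) * 1" by (simp add: piv_def)
    show ?case using a b inZ_1 inZ_ev by blast
  next
    case (Suc i)
    have ij: "Suc i \<le> j" using Suc.prems power_increasing_iff[of "2::nat" "Suc i" j] unfolding MM_def by simp
    from Suc.IH obtain w1 w2 where w1: "inZ w1" "1 - zeta^(2^i) = piv^(2^i) * w1"
      and w2: "inZ w2" "2 = piv^(2^i) * w2" using Suc.prems by force
    define q where "q = zeta^(2^i)"
    have "1 - zeta^(2^Suc i) = (1 - q) * (2 - (1 - q))"
      unfolding q_def by (simp add: power_mult power2_eq_square algebra_simps mult_2 power_add)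
    also have "\<dots> = piv^(2^Suc i) * (w1 * (w2 - w1))"
    proof -
      define P where "P = piv^(2^i)"
      have e1: "1 - q = P * w1" using w1(2) unfolding q_def P_def .
      have e2: "2 = P * w2" using w2(2) unfolding P_def .
      have e3: "piv^(2^Suc i) = P * P" unfolding P_def by (simp add: mult_2 power_add)
      have "(1 - q) * (2 - (1 - q)) = (P * w1) * (P * w2 - P * w1)" by (simp only: e1[symmetric] e2[symmetric])
      also have "\<dots> = (P * P) * (w1 * (w2 - w1))" by (simp add: algebra_simps)
      finally show ?thesis unfolding e3 .
    qed
    finally have A: "1 - zeta^(2^Suc i) = piv^(2^Suc i) * (w1 * (w2 - w1))" .
    define L :: nat where "L = 2^(j - Suc i)"
    have si: "Suc i + (j - Suc i) = j" using ij by simp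
    have "(2::nat)^(Suc i) * L = 2^(Suc i + (j - Suc i))" unfolding L_def by (rule power_add[symmetric])
    hence "(2::nat)^(Suc i) * L = MM" unfolding si MM_def .
    hence "(zeta^(2^Suc i))^L = zeta ^ MM" by (simp only: power_mult[symmetric])
    hence "(zeta^(2^Suc i))^L = -1" using zeta_pow_MM by simp
    moreover have "1 - (zeta^(2^Suc i))^L = (1 - zeta^(2^Suc i)) * (\<Sum>l<L. (zeta^(2^Suc i))^l)"
      by (rule one_diff_power_eq)
    ultimately have "2 = (1 - zeta^(2^Suc i)) * (\<Sum>l<L. (zeta^(2^Suc i))^l)" by simp
    also have "\<dots> = piv^(2^Suc i) * (w1 * (w2 - w1) * (\<Sum>l<L. (zeta^(2^Suc i))^l))"
      using A by simp
    finally have B: "2 = piv^(2^Suc i) * (w1 * (w2 - w1) * (\<Sum>l<L. (zeta^(2^Suc i))^l))" .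
    have "inZ (w1 * (w2 - w1))" "inZ (w1 * (w2 - w1) * (\<Sum>l<L. (zeta^(2^Suc i))^l))"
    proof -
      have "inZ (\<Sum>l<L. (zeta^(2^Suc i))^l)" by (rule inZ_sum) simp
      thus "inZ (w1 * (w2 - w1))" "inZ (w1 * (w2 - w1) * (\<Sum>l<L. (zeta^(2^Suc i))^l))"
        using w1 w2 by simp_all
    qed
    thus ?case using A B by blast
  qed
  show ?thesis using main[of j] unfolding MM_def by simp
qed

lemma coeff_pow2_zero: fixes x :: int assumes "\<And>b. 2^b dvd x" shows "x = 0"
proof (rule ccontr)
  assume "x \<noteq> 0"
  have "2^(nat \<bar>x\<bar>) dvd x" by (rule assms)
  hence "\<bar>2^(nat \<bar>x\<bar>)\<bar> \<le> \<bar>x\<bar>" by (rule dvd_imp_le_int[OF \<open>x \<noteq> 0\<close>])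
  hence "2^(nat \<bar>x\<bar>) \<le> \<bar>x\<bar>" by simp
  moreover have "int (nat \<bar>x\<bar>) < 2^(nat \<bar>x\<bar>)"
    using less_exp[of "nat \<bar>x\<bar>"] by (metis of_nat_less_iff of_nat_numeral of_nat_power)
  moreover have "int (nat \<bar>x\<bar>) = \<bar>x\<bar>" by simp
  ultimately show False by linarith
qed

lemma val_exists:
  assumes z: "inZ z" "z \<noteq> 0"
  shows "\<exists>a w. inZ w \<and> z = piv ^ a * w \<and> \<not> pdvd w"
proof (rule ccontr)
  assume H: "\<not> ?thesis"
  have P: "\<exists>w. inZ w \<and> z = piv ^ a * w" for a
  proof (induction a)
    case 0 show ?case using z by auto
  next
    case (Suc a)
    then obtain w where w: "inZ w" "z = piv ^ a * w" by blast
    hence "pdvd w" using H by blast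
    then obtain w' where "inZ w'" "w = piv * w'" unfolding pdvd_def by blast
    thus ?case using w by (intro exI[of _ w']) (simp add: algebra_simps)
  qed
  obtain T0 where T0: "inZ T0" "piv ^ MM = 2 * T0" using pi_MM by blast
  have two: "\<exists>w. inZ w \<and> z = 2 ^ b * w" for b
  proof -
    obtain w where w: "inZ w" "z = piv ^ (MM * b) * w" using P by blast
    have "piv ^ (MM * b) = 2 ^ b * T0 ^ b" using T0 by (simp add: power_mult power_mult_distrib)
    thus ?thesis using w T0 by (intro exI[of _ "T0 ^ b * w"]) (simp add: algebra_simps)
  qed
  obtain A0 where "z = ev A0" using z unfolding inZ_def by blast
  then obtain A where A: "degree A < MM" "z = ev A" using reduce by metis
  have "2 ^ b dvd coeff A i" for b i
  proof -
    obtain w where w: "inZ w" "z = 2 ^ b * w" using two by blast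
    then obtain C0 where "w = ev C0" unfolding inZ_def by blast
    then obtain C where C: "degree C < MM" "w = ev C" using reduce by metis
    have "ev A = ev (smult (2^b) C)" using A w C by simp
    moreover have "degree (smult (2^b) C) < MM" using C by simp
    ultimately have "A = smult (2^b) C" using uniq A(1) by blast
    thus ?thesis by simp
  qed
  hence "coeff A i = 0" for i using coeff_pow2_zero by blast
  hence "A = 0" by (simp add: poly_eq_iff)
  thus False using A z by simp
qed

lemma main_L:
  assumes z: "inZ z" and zz: "z * cnj z = 2 ^ m" and m: "m \<ge> 2"
  shows "\<exists>w. inZ w \<and> z = 2 * w"
proof -
  have "z \<noteq> 0" using zz by auto
  then obtain a w where w: "inZ w" "z = piv ^ a * w" "\<not> pdvd w" using val_exists z by blast
  define eps where "eps = - (zeta ^ (2*MM - 1))"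
  have eps_ev: "eps = ev (- monom 1 (2*MM-1))" unfolding eps_def by simp
  have eps_nd: "\<not> pdvd eps" unfolding eps_ev pdvd_iff by (simp add: poly_monom)
  have inZ_eps: "inZ eps" unfolding eps_ev by simp
  have s: "Suc (2*MM-1) = 2*MM" using MM_ge2 by simp
  have cpiv: "cnj piv = piv * eps"
  proof -
    have "piv * eps = zeta * zeta ^ (2*MM - 1) - zeta ^ (2*MM - 1)"
      unfolding piv_def eps_def by (simp add: algebra_simps)
    also have "zeta * zeta ^ (2*MM - 1) = 1" using zeta_pow_2MM s by (metis power_Suc)
    finally show ?thesis unfolding piv_def by (simp add: cnj_zeta)
  qed
  obtain B where B: "w = ev B" using w unfolding inZ_def by blast
  have cw_nd: "\<not> pdvd (cnj w)"
    using w(3) unfolding B ev_star[symmetric] by (simp add: pdvd_iff poly_star_1)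
  define X where "X = eps ^ a * (w * cnj w)"
  have inZX: "inZ X" unfolding X_def using w inZ_eps by simp
  have X_nd: "\<not> pdvd X" unfolding X_def
    using w inZ_eps eps_nd cw_nd not_pdvd_power[OF inZ_eps eps_nd] by (simp add: pdvd_mult)
  have zcz: "z * cnj z = piv ^ (2*a) * X"
    unfolding X_def w(2) using cpiv by (simp add: power_mult_distrib algebra_simps power2_eq_square power_mult)
  have aM: "MM \<le> a"
  proof (rule ccontr)
    assume "\<not> MM \<le> a"
    obtain w2 where w2: "inZ w2" "2 = piv ^ MM * w2" using pi_dvd_2 by blast
    have "(2::complex) ^ m = piv ^ (MM * m) * w2 ^ m"
      using w2 by (metis power_mult power_mult_distrib)
    moreover have h: "2*a < MM*m"
    proof -
      have "MM*2 \<le> MM*m" using m by (rule mult_le_mono2)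
      thus ?thesis using \<open>\<not> MM \<le> a\<close> by linarith
    qed
    moreover have "MM * m = 2*a + (MM * m - 2*a)" "MM * m - 2*a \<ge> 1" using h by auto
    ultimately have "piv ^ (2*a) * X = piv ^ (2*a) * (piv ^ (MM * m - 2*a) * w2 ^ m)"
      using zz zcz by (metis power_add mult.assoc)
    moreover have "piv \<noteq> 0" unfolding piv_def using zeta_ne1 by simp
    ultimately have "X = piv ^ (MM * m - 2*a) * w2 ^ m" by simp
    also have "\<dots> = piv * (piv ^ (MM * m - 2*a - 1) * w2 ^ m)"
      using \<open>MM * m - 2*a \<ge> 1\<close> by (metis (no_types) Suc_diff_1 less_le_trans mult.assoc power_Suc zero_less_one)
    finally have "pdvd X" unfolding pdvd_def using w2 by (auto intro!: exI[of _ "piv ^ (MM * m - 2*a - 1) * w2 ^ m"])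
    with X_nd show False by simp
  qed
  obtain T0 where T0: "inZ T0" "piv ^ MM = 2 * T0" using pi_MM by blast
  have "z = piv ^ MM * (piv ^ (a - MM) * w)" using w(2) aM by (simp add: power_add[symmetric])
  also have "\<dots> = 2 * (T0 * piv ^ (a - MM) * w)" using T0 by simp
  finally show ?thesis using T0 w by (intro exI[of _ "T0 * piv ^ (a - MM) * w"]) simp
qed

lemma descent: "inZ z \<Longrightarrow> z * cnj z = 2 ^ (2*h+1) \<Longrightarrow> \<exists>w. inZ w \<and> z = 2^h * w \<and> w * cnj w = 2"
proof (induction h arbitrary: z)
  case 0 thus ?case by (intro exI[of _ z]) simp
next
  case (Suc h)
  obtain w where w: "inZ w" "z = 2 * w" using main_L[OF Suc.prems(1) Suc.prems(2)] by auto
  have "4 * (w * cnj w) = 4 * 2 ^ (2*h+1)" using Suc.prems(2) w(2) by simp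
  hence "w * cnj w = 2 ^ (2*h+1)" by simp
  from Suc.IH[OF w(1) this] obtain w' where "inZ w'" "w = 2^h * w'" "w' * cnj w' = 2" by blast
  thus ?case using w by (intro exI[of _ w']) simp
qed

end

context cyc
begin

lemma evz_as_sum: "degree B < MM \<Longrightarrow> evz z B = (\<Sum>c<MM. of_int (coeff B c) * z ^ c)"
proof -
  assume d: "degree B < MM"
  have "degree B \<le> MM - 1" using d by simp
  hence "(\<Sum>i\<le>MM-1. monom (coeff B i) i) = B" by (rule poly_as_sum_of_monoms')
  moreover have "{..MM-1} = {..<MM}" using MM_ge2 by auto
  ultimately have "B = (\<Sum>i<MM. monom (coeff B i) i)" by simp
  hence "evz z B = evz z (\<Sum>i<MM. monom (coeff B i) i)" by simp
  thus ?thesis by (simp add: evz_sum)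
qed

lemma cis_ne1:
  fixes d :: int
  assumes "d \<noteq> 0" "\<bar>d\<bar> < int MM"
  shows "cis (2 * pi * real_of_int d / real MM) \<noteq> 1"
proof
  assume "cis (2 * pi * real_of_int d / real MM) = 1"
  hence "Re (cis (2 * pi * real_of_int d / real MM)) = 1" by simp
  hence "cos (2 * pi * real_of_int d / real MM) = 1" by simp
  then obtain n :: int where n: "2 * pi * real_of_int d / real MM = real_of_int n * 2 * pi"
    by (auto simp: cos_one_2pi_int)
  have MMp: "real MM > 0" using MM_ge2 by simp
  from n have "real_of_int d = real_of_int n * real MM" using MMp by (simp add: field_simps)
  hence dn: "d = n * int MM" by (metis of_int_eq_iff of_int_mult of_int_of_nat_eq)
  show False
  proof (cases "n = 0")
    case True thus False using dn assms by simp
  next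
    case False
    hence "\<bar>n\<bar> \<ge> 1" by simp
    hence "\<bar>d\<bar> \<ge> int MM" unfolding dn by (simp add: abs_mult mult_le_cancel_right1)
    thus False using assms by simp
  qed
qed

lemma orth:
  assumes c: "c < MM" and e: "e < MM"
  shows "(\<Sum>l<MM. (zeta^(2*l+1))^c * cnj ((zeta^(2*l+1))^e)) = (if c = e then of_nat MM else 0)"
proof -
  define d where "d = real c - real e"
  have tm: "(zeta^(2*l+1))^c * cnj ((zeta^(2*l+1))^e) = cis (pi * d / MM) * cis (2 * pi * d / MM) ^ l" for l
  proof -
    have zp: "zeta ^ N = cis (real N * (pi / MM))" for N unfolding zeta_def by (rule Complex.DeMoivre)
    have "(zeta^(2*l+1))^c = cis (real ((2*l+1)*c) * (pi / MM))"
      unfolding power_mult[symmetric] by (rule zp)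
    moreover have "(zeta^(2*l+1))^e = cis (real ((2*l+1)*e) * (pi / MM))"
      unfolding power_mult[symmetric] by (rule zp)
    moreover have "cis (2 * pi * d / MM) ^ l = cis (real l * (2 * pi * d / MM))" by (rule Complex.DeMoivre)
    ultimately show ?thesis
      by (simp add: cis_cnj cis_mult d_def algebra_simps add_divide_distrib diff_divide_distrib)
  qed
  show ?thesis
  proof (cases "c = e")
    case True
    hence "d = 0" unfolding d_def by simp
    thus ?thesis using True tm by simp
  next
    case False
    define q where "q = cis (2 * pi * d / MM)"
    have dint: "d = real_of_int (int c - int e)" unfolding d_def by simp
    have "q \<noteq> 1" unfolding q_def dint
      by (rule cis_ne1) (use False c e in auto)
    have "q ^ MM = cis (real MM * (2 * pi * d / MM))" unfolding q_def by (rule Complex.DeMoivre)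
    also have "real MM * (2 * pi * d / MM) = 2 * pi * real_of_int (int c - int e)"
      using MM_ge2 dint by simp
    also have "cis \<dots> = 1" by (rule cis_multiple_2pi) simp
    finally have qM: "q ^ MM = 1" .
    have "(\<Sum>l<MM. q ^ l) = 0" using sum_gp_strict[of q MM] \<open>q \<noteq> 1\<close> qM by simp
    hence "(\<Sum>l<MM. (zeta^(2*l+1))^c * cnj ((zeta^(2*l+1))^e)) = 0"
      unfolding tm q_def[symmetric] by (simp add: sum_distrib_left[symmetric])
    thus ?thesis using False by simp
  qed
qed

lemma coef_bound:
  assumes dB: "degree B < MM" and BB: "ev B * cnj (ev B) = 2"
  shows "coeff B c \<in> {-1, 0, 1}"
proof (cases "c < MM")
  case False
  hence "coeff B c = 0" using dB by (simp add: coeff_eq_0)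
  thus ?thesis by simp
next
  case True
  define om where "om l = zeta ^ (2*l+1)" for l
  define V where "V = B * star B - 2"
  have "ev V = ev B * cnj (ev B) - 2" unfolding V_def by (simp add: ev_star numeral_poly)
  hence evV: "ev V = 0" using BB by simp
  have each: "evz (om l) B * cnj (evz (om l) B) = 2" for l
  proof -
    have "evz (om l) V = 0" unfolding om_def by (rule galois[OF evV]) simp
    moreover have "evz (om l) (star B) = cnj (evz (om l) B)"
    proof -
      have "(om l) ^ (2*MM - 1) = (zeta ^ (2*MM - 1)) ^ (2*l+1)" unfolding om_def
        by (metis power_mult mult.commute)
      also have "\<dots> = cnj (om l)" unfolding om_def by (simp add: cnj_zeta)
      finally show ?thesis unfolding star_def by (simp add: evz_pcompose evz_cnj)
    qed
    ultimately show ?thesis unfolding V_def by (simp add: numeral_poly)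
  qed
  define b where "b c = (of_int (coeff B c) :: complex)" for c
  have exp: "evz (om l) B = (\<Sum>c<MM. b c * om l ^ c)" for l
    unfolding b_def by (rule evz_as_sum[OF dB])
  have "(\<Sum>l<MM. evz (om l) B * cnj (evz (om l) B)) = (\<Sum>l<MM. 2::complex)"
    using each by simp
  also have "\<dots> = 2 * of_nat MM" by simp
  finally have L: "(\<Sum>l<MM. evz (om l) B * cnj (evz (om l) B)) = 2 * of_nat MM" .
  have "(\<Sum>l<MM. evz (om l) B * cnj (evz (om l) B))
      = (\<Sum>l<MM. \<Sum>c<MM. \<Sum>c'<MM. b c * b c' * (om l ^ c * cnj (om l ^ c')))"
    unfolding exp by (simp add: sum_product b_def algebra_simps)
  also have "\<dots> = (\<Sum>c<MM. \<Sum>l<MM. \<Sum>c'<MM. b c * b c' * (om l ^ c * cnj (om l ^ c')))"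
    by (rule sum.swap)
  also have "\<dots> = (\<Sum>c<MM. \<Sum>c'<MM. \<Sum>l<MM. b c * b c' * (om l ^ c * cnj (om l ^ c')))"
    by (rule sum.cong[OF refl]) (rule sum.swap)
  also have "\<dots> = (\<Sum>c<MM. \<Sum>c'<MM. b c * b c' * (\<Sum>l<MM. om l ^ c * cnj (om l ^ c')))"
    by (simp only: sum_distrib_left)
  also have "\<dots> = (\<Sum>c<MM. \<Sum>c'<MM. b c * b c' * (if c = c' then of_nat MM else 0))"
  proof (intro sum.cong refl)
    fix c c' assume a: "c \<in> {..<MM}" "c' \<in> {..<MM}"
    have "(\<Sum>l<MM. om l ^ c * cnj (om l ^ c')) = (if c = c' then of_nat MM else 0)"
      unfolding om_def using a by (intro orth) auto
    thus "b c * b c' * (\<Sum>l<MM. om l ^ c * cnj (om l ^ c')) = b c * b c' * (if c = c' then of_nat MM else 0)"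
      by (simp only:)
  qed
  also have "\<dots> = (\<Sum>c<MM. b c * b c * of_nat MM)"
  proof (intro sum.cong refl)
    fix c assume "c \<in> {..<MM}"
    have "(\<Sum>c'<MM. b c * b c' * (if c = c' then of_nat MM else 0)) = (\<Sum>c'<MM. if c = c' then b c * b c' * of_nat MM else 0)"
      by (intro sum.cong refl) simp
    also have "\<dots> = b c * b c * of_nat MM" using \<open>c \<in> {..<MM}\<close> by simp
    finally show "(\<Sum>c'<MM. b c * b c' * (if c = c' then of_nat MM else 0)) = b c * b c * of_nat MM" .
  qed
  finally have R: "(\<Sum>l<MM. evz (om l) B * cnj (evz (om l) B)) = of_nat MM * (\<Sum>c<MM. b c * b c)"
    by (simp add: sum_distrib_left algebra_simps)
  have "of_nat MM * (\<Sum>c<MM. b c * b c) = of_nat MM * (2::complex)" using L R by simp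
  hence "(\<Sum>c<MM. b c * b c) = 2" using MM_ge2 by simp
  hence "of_int (\<Sum>c<MM. coeff B c * coeff B c) = (of_int 2 :: complex)" unfolding b_def by simp
  hence S: "(\<Sum>c<MM. coeff B c * coeff B c) = 2" by (metis of_int_eq_iff)
  have "coeff B c * coeff B c \<le> (\<Sum>c<MM. coeff B c * coeff B c)"
    by (rule member_le_sum) (use True in auto)
  hence "coeff B c * coeff B c \<le> 2" using S by simp
  hence le2: "coeff B c * coeff B c \<le> 2" .
  have "\<bar>coeff B c\<bar> \<le> 1"
  proof (rule ccontr)
    assume "\<not> \<bar>coeff B c\<bar> \<le> 1"
    hence g: "2 \<le> \<bar>coeff B c\<bar>" by simp
    have "2 * 2 \<le> \<bar>coeff B c\<bar> * \<bar>coeff B c\<bar>" by (rule mult_mono[OF g g]) auto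
    moreover have "\<bar>coeff B c\<bar> * \<bar>coeff B c\<bar> = coeff B c * coeff B c" by (rule abs_mult_self_eq)
    ultimately show False using le2 by simp
  qed
  thus ?thesis by auto
qed

end

definition sg :: "bool \<Rightarrow> int" where "sg b = (if b then -1 else 1)"

lemma sg_xor: "sg (P \<noteq> Q) = sg P * sg Q" by (simp add: sg_def)
lemma walsh_term: "(-1::int)^(if P \<noteq> Q then 1 else 0) = sg P * sg Q" by (simp add: sg_def)

lemma finite_vecs [simp]: "finite (vecs n)"
  unfolding vecs_def using finite_lists_length_eq[of "UNIV::bool set" n] by simp

lemma sg_count: "sg (odd (\<Sum>i<(m::nat). if P i then 1 else 0::nat)) = (\<Prod>i<m. sg (P i))"
proof (induction m)
  case 0 show ?case by (simp add: sg_def)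
next
  case (Suc m)
  have A: "sg (odd (S + x)) = sg (odd S) * sg (odd x)" for S x :: nat by (simp add: sg_def)
  have B: "sg (odd (if P m then 1 else 0::nat)) = sg (P m)" by (simp add: sg_def)
  show ?case by (simp only: sum.lessThan_Suc prod.lessThan_Suc A B Suc.IH)
qed

lemma vecs_Suc: "vecs (Suc m) = (\<lambda>(b, y). b # y) ` (UNIV \<times> vecs m)"
  unfolding vecs_def by (force simp: length_Suc_conv)

lemma inj_cons: "inj_on (\<lambda>(b::bool, y). b # y) (UNIV \<times> vecs m)"
  by (auto simp: inj_on_def)

lemma sum_vecs_Suc: "(\<Sum>v\<in>vecs (Suc m). F v) = (\<Sum>y\<in>vecs m. F (True # y)) + (\<Sum>y\<in>vecs m. F (False # y))"
proof -
  have "(\<Sum>v\<in>vecs (Suc m). F v) = (\<Sum>p\<in>UNIV \<times> vecs m. F ((\<lambda>(b, y). b # y) p))"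
    unfolding vecs_Suc by (rule sum.reindex[OF inj_cons, unfolded comp_def])
  also have "\<dots> = (\<Sum>(b,y)\<in>UNIV \<times> vecs m. F (b # y))" by (simp add: split_def)
  also have "\<dots> = (\<Sum>b\<in>UNIV. \<Sum>y\<in>vecs m. F (b # y))"
    by (rule sum.cartesian_product[symmetric])
  also have "\<dots> = (\<Sum>y\<in>vecs m. F (True # y)) + (\<Sum>y\<in>vecs m. F (False # y))"
    by (simp add: UNIV_bool add.commute)
  finally show ?thesis .
qed

lemma char_sum: "(\<Sum>y\<in>vecs m. \<Prod>i<m. sg (g i \<and> y ! i)) = (if \<forall>i<m. \<not> g i then 2^m else 0)"
proof (induction m arbitrary: g)
  case 0
  have "vecs 0 = {[]}" unfolding vecs_def by auto
  thus ?case by simp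
next
  case (Suc m)
  have split: "(\<Prod>i<Suc m. sg (g i \<and> (b # y) ! i)) = sg (g 0 \<and> b) * (\<Prod>i<m. sg (g (Suc i) \<and> y ! i))" for b y
    by (simp only: prod.lessThan_Suc_shift nth_Cons_0 nth_Cons_Suc)
  have IH: "(\<Sum>y\<in>vecs m. \<Prod>i<m. sg (g (Suc i) \<and> y ! i)) = (if \<forall>i<m. \<not> g (Suc i) then 2^m else 0)"
    by (rule Suc.IH)
  have "(\<Sum>y\<in>vecs (Suc m). \<Prod>i<Suc m. sg (g i \<and> y ! i))
      = (sg (g 0) + 1) * (\<Sum>y\<in>vecs m. \<Prod>i<m. sg (g (Suc i) \<and> y ! i))"
    unfolding sum_vecs_Suc split by (simp add: sum_distrib_left[symmetric] sg_def algebra_simps)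
  also have "\<dots> = (if \<forall>i<Suc m. \<not> g i then 2^Suc m else 0)"
    unfolding IH by (auto simp: sg_def All_less_Suc2)
  finally show ?case .
qed

lemma sum_split_nat: "(\<Sum>i<a+(b::nat). F i) = (\<Sum>i<a. F i) + (\<Sum>i<b. F (a+i))"
  by (induction b) (simp_all add: add.assoc)

lemma ip_append:
  assumes "length u = length x" "length z = length y"
  shows "ip (u @ z) (x @ y) = (ip u x \<noteq> ip z y)"
proof -
  have "(\<Sum>i<length (u @ z). (if (u @ z) ! i \<and> (x @ y) ! i then 1 else 0 :: nat))
      = (\<Sum>i<length u. (if u ! i \<and> x ! i then 1 else 0)) + (\<Sum>i<length z. (if z ! i \<and> y ! i then 1 else 0))"
    using assms by (simp add: sum_split_nat nth_append)
  thus ?thesis unfolding ip_def by simp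
qed

lemma sg_ip: "sg (ip u x) = (\<Prod>i<length u. sg (u ! i \<and> x ! i))"
  unfolding ip_def by (rule sg_count)

lemma vecs_add_sum:
  "(\<Sum>v\<in>vecs (n+m). F v) = (\<Sum>x\<in>vecs n. \<Sum>y\<in>vecs m. F (x @ y))"
proof -
  have eq: "vecs (n+m) = (\<lambda>p. fst p @ snd p) ` (vecs n \<times> vecs m)"
  proof
    show "vecs (n+m) \<subseteq> (\<lambda>p. fst p @ snd p) ` (vecs n \<times> vecs m)"
    proof
      fix v assume "v \<in> vecs (n+m)"
      hence "(take n v, drop n v) \<in> vecs n \<times> vecs m" "v = fst (take n v, drop n v) @ snd (take n v, drop n v)"
        unfolding vecs_def by auto
      thus "v \<in> (\<lambda>p. fst p @ snd p) ` (vecs n \<times> vecs m)" by blast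
    qed
  qed (auto simp: vecs_def)
  have inj: "inj_on (\<lambda>p. fst p @ snd p) (vecs n \<times> vecs m)"
    by (auto simp: inj_on_def vecs_def)
  have "(\<Sum>v\<in>vecs (n+m). F v) = (\<Sum>p\<in>vecs n \<times> vecs m. F (fst p @ snd p))"
    unfolding eq by (rule sum.reindex[OF inj, unfolded comp_def])
  also have "\<dots> = (\<Sum>(x,y)\<in>vecs n \<times> vecs m. F (x @ y))" by (simp add: split_def)
  also have "\<dots> = (\<Sum>x\<in>vecs n. \<Sum>y\<in>vecs m. F (x @ y))"
    by (rule sum.cartesian_product[symmetric])
  finally show ?thesis .
qed

lemma sg_and_pair: "sg (A \<and> Y) * sg (Z \<and> Y) = sg ((A \<noteq> Z) \<and> Y)"
  by (simp add: sg_def)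

lemma walsh_gray:
  assumes w: "w \<in> vecs (n + K)" and K: "K = k - 1"
  shows "walsh (n + K) (gray n k f) w =
     2^K * (\<Sum>x\<in>{x\<in>vecs n. \<forall>i<K. digit f i x = drop n w ! i}.
        sg (digit f (k-1) x) * sg (ip (take n w) x))"
proof -
  define u where "u = take n w"
  define z where "z = drop n w"
  have wuz: "w = u @ z" and lu: "length u = n" and lz: "length z = K"
    using w unfolding u_def z_def vecs_def by auto
  have tm: "(-1::int) ^ (if gray n k f (x @ y) \<noteq> ip w (x @ y) then 1 else 0)
      = sg (digit f (k-1) x) * sg (ip u x) * (\<Prod>i<K. sg ((digit f i x \<noteq> z ! i) \<and> y ! i))"
    if x: "x \<in> vecs n" and y: "y \<in> vecs K" for x y
  proof -
    have lx: "length x = n" and ly: "length y = K" using x y unfolding vecs_def by auto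
    have g: "gray n k f (x @ y) = (odd (\<Sum>i<K. (if digit f i x \<and> y ! i then 1 else 0 :: nat)) \<noteq> digit f (k-1) x)"
      unfolding gray_def K using lx by (simp add: nth_append)
    have ipw: "ip w (x @ y) = (ip u x \<noteq> ip z y)" unfolding wuz using lu lz lx ly by (simp add: ip_append)
    have "(-1::int) ^ (if gray n k f (x @ y) \<noteq> ip w (x @ y) then 1 else 0) = sg (gray n k f (x @ y)) * sg (ip w (x @ y))"
      by (rule walsh_term)
    also have "\<dots> = ((\<Prod>i<K. sg (digit f i x \<and> y ! i)) * sg (digit f (k-1) x)) * (sg (ip u x) * (\<Prod>i<K. sg (z ! i \<and> y ! i)))"
      unfolding g ipw sg_xor sg_count sg_ip lz ..
    also have "\<dots> = sg (digit f (k-1) x) * sg (ip u x) * ((\<Prod>i<K. sg (digit f i x \<and> y ! i)) * (\<Prod>i<K. sg (z ! i \<and> y ! i)))"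
      by (simp add: algebra_simps)
    also have "(\<Prod>i<K. sg (digit f i x \<and> y ! i)) * (\<Prod>i<K. sg (z ! i \<and> y ! i)) = (\<Prod>i<K. sg ((digit f i x \<noteq> z ! i) \<and> y ! i))"
      by (simp add: prod.distrib[symmetric] sg_and_pair)
    finally show ?thesis .
  qed
  have "walsh (n + K) (gray n k f) w = (\<Sum>x\<in>vecs n. \<Sum>y\<in>vecs K.
          sg (digit f (k-1) x) * sg (ip u x) * (\<Prod>i<K. sg ((digit f i x \<noteq> z ! i) \<and> y ! i)))"
    unfolding walsh_def vecs_add_sum by (intro sum.cong refl) (rule tm; assumption)
  also have "\<dots> = (\<Sum>x\<in>vecs n. sg (digit f (k-1) x) * sg (ip u x) * (if \<forall>i<K. digit f i x = z ! i then 2^K else 0))"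
    by (simp add: sum_distrib_left[symmetric] char_sum)
  also have "\<dots> = (\<Sum>x\<in>vecs n. if \<forall>i<K. digit f i x = z ! i then 2^K * (sg (digit f (k-1) x) * sg (ip u x)) else 0)"
  proof -
    have ifl: "a * (if P then c else 0) = (if P then c * a else 0)" for a c :: int and P by simp
    show ?thesis by (intro sum.cong refl) (simp only: ifl)
  qed
  also have "\<dots> = 2^K * (\<Sum>x\<in>{x\<in>vecs n. \<forall>i<K. digit f i x = z ! i}. sg (digit f (k-1) x) * sg (ip u x))"
    by (simp add: sum.inter_filter[symmetric] sum_distrib_left)
  finally show ?thesis unfolding u_def z_def .
qed

lemma bits_mod: "(\<forall>i<K. odd ((a::nat) div 2^i) = odd (b div 2^i)) \<longleftrightarrow> a mod 2^K = b mod 2^K"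
proof (induction K arbitrary: a b)
  case 0 show ?case by simp
next
  case (Suc K)
  have m: "x mod 2^Suc K = x mod 2 + 2 * ((x div 2) mod 2^K)" for x :: nat
    by (simp add: mod_mult2_eq)
  have d: "x div (2 * 2^i) = (x div 2) div 2^i" for x i :: nat
    by (simp add: div_mult2_eq)
  have "(\<forall>i<Suc K. odd (a div 2^i) = odd (b div 2^i)) \<longleftrightarrow>
        odd a = odd b \<and> (\<forall>i<K. odd ((a div 2) div 2^i) = odd ((b div 2) div 2^i))"
    by (simp add: All_less_Suc2 d)
  also have "\<dots> \<longleftrightarrow> a mod 2 = b mod 2 \<and> (a div 2) mod 2^K = (b div 2) mod 2^K"
  proof -
    have p: "(odd a = odd b) \<longleftrightarrow> a mod 2 = b mod 2"
      by (cases "even a"; cases "even b") (simp_all add: even_iff_mod_2_eq_zero odd_iff_mod_2_eq_one)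
    show ?thesis using p Suc.IH[of "a div 2" "b div 2"] by simp
  qed
  also have "\<dots> \<longleftrightarrow> a mod 2^Suc K = b mod 2^Suc K"
  proof -
    have h: "r < 2 \<Longrightarrow> s < 2 \<Longrightarrow> (r + 2 * X = s + 2 * Y \<longleftrightarrow> r = s \<and> X = Y)" for r s X Y :: nat
      by presburger
    show ?thesis unfolding m by (rule h[symmetric]) simp_all
  qed
  finally show ?case .
qed

definition Ssum :: "(bool list \<Rightarrow> nat) \<Rightarrow> nat \<Rightarrow> nat \<Rightarrow> bool list \<Rightarrow> nat \<Rightarrow> int" where
  "Ssum f n K u c = (\<Sum>x\<in>{x\<in>vecs n. f x mod 2^K = c}. sg (digit f K x) * sg (ip u x))"

context cyc
begin

lemma neg1_sg: "(-1::complex) ^ q = of_int (sg (odd q))"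
  by (cases "even q") (simp_all add: sg_def)

lemma zeta_pow_split: "zeta ^ N = zeta ^ (N mod MM) * of_int (sg (odd (N div MM)))"
proof -
  have "zeta ^ N = zeta ^ (N mod MM + MM * (N div MM))" by simp
  also have "\<dots> = zeta ^ (N mod MM) * (zeta ^ MM) ^ (N div MM)" by (simp only: power_add power_mult)
  also have "\<dots> = zeta ^ (N mod MM) * of_int (sg (odd (N div MM)))" by (simp add: zeta_pow_MM neg1_sg)
  finally show ?thesis .
qed

lemma H_decomp:
  "(\<Sum>x\<in>vecs n. zeta ^ (f x) * (-1) ^ (if ip u x then 1 else 0)) = ev (\<Sum>c<MM. monom (Ssum f n j u c) c)"
proof -
  have t: "zeta ^ (f x) * (-1) ^ (if ip u x then 1 else 0) = zeta ^ (f x mod MM) * of_int (sg (digit f j x) * sg (ip u x))" for x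
    by (subst zeta_pow_split) (simp add: digit_def MM_def sg_def)
  have "(\<Sum>x\<in>vecs n. zeta ^ (f x) * (-1) ^ (if ip u x then 1 else 0))
      = (\<Sum>x\<in>vecs n. zeta ^ (f x mod MM) * of_int (sg (digit f j x) * sg (ip u x)))"
    by (simp only: t)
  also have "\<dots> = (\<Sum>c<MM. \<Sum>x\<in>{x\<in>vecs n. f x mod MM = c}. zeta ^ (f x mod MM) * of_int (sg (digit f j x) * sg (ip u x)))"
    by (rule sum.group[symmetric]) (use MM_ge2 in auto)
  also have "\<dots> = (\<Sum>c<MM. of_int (Ssum f n j u c) * zeta ^ c)"
    unfolding Ssum_def MM_def by (intro sum.cong refl) (simp add: sum_distrib_left sum_distrib_right mult.commute)
  also have "\<dots> = ev (\<Sum>c<MM. monom (Ssum f n j u c) c)" by (simp add: evz_sum)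
  finally show ?thesis .
qed

lemma S_vals:
  assumes n: "n = 2*h+1"
    and gb: "cmod (\<Sum>x\<in>vecs n. zeta ^ (f x) * (-1) ^ (if ip u x then 1 else 0)) = 2 powr (real n / 2)"
    and c: "c < MM"
  shows "Ssum f n j u c \<in> {0, 2^h, -(2^h)}"
proof -
  define P where "P = (\<Sum>c<MM. monom (Ssum f n j u c) c)"
  have cP: "coeff P i = (if i < MM then Ssum f n j u i else 0)" for i
    unfolding P_def by (simp add: coeff_sum coeff_monom)
  have dP: "degree P < MM"
  proof -
    have "degree P \<le> MM - 1" by (rule degree_le) (use cP MM_ge2 in auto)
    thus ?thesis using MM_ge2 by simp
  qed
  define H where "H = ev P"
  have HH: "H = (\<Sum>x\<in>vecs n. zeta ^ (f x) * (-1) ^ (if ip u x then 1 else 0))"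
    unfolding H_def P_def by (rule H_decomp[symmetric])
  have "H * cnj H = of_real ((cmod H)^2)" by (rule complex_norm_square[symmetric])
  also have "(cmod H)^2 = (2 powr (real n / 2))^2" using gb HH by simp
  also have "\<dots> = 2 powr (real n)" by (simp add: powr_power)
  also have "\<dots> = 2 ^ n" by (simp add: powr_realpow)
  finally have "H * cnj H = 2 ^ (2*h+1)" using n by simp
  from descent[OF _ this] obtain w where w: "inZ w" "H = 2^h * w" "w * cnj w = 2"
    unfolding H_def by auto
  obtain B0 where "w = ev B0" using w(1) unfolding inZ_def by blast
  then obtain B where B: "degree B < MM" "w = ev B" using reduce by metis
  have "ev P = ev (smult (2^h) B)" using w(2) B(2) unfolding H_def by simp
  moreover have "degree (smult (2^h) B) < MM" using B(1) by simp
  ultimately have PB: "P = smult (2^h) B" using uniq dP by blast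
  have "coeff B c \<in> {-1, 0, 1}" by (rule coef_bound[OF B(1)]) (use w(3) B(2) in simp)
  moreover have "Ssum f n j u c = 2^h * coeff B c" using cP[of c] c PB by simp
  ultimately show ?thesis by auto
qed

end

theorem proposition7:
  fixes n k :: nat and f :: "bool list \<Rightarrow> nat"
  assumes "odd n" and "k \<ge> 3"
    and "\<forall>x\<in>vecs n. f x < 2 ^ k"
    and "gbent n k f"
  shows "plateaued (n + (k - 1)) (k - 2) (gray n k f)"
proof -
  define K where "K = k - 1"
  have K1: "1 \<le> K" "K \<ge> 2" using assms(2) unfolding K_def by auto
  interpret cyc K by unfold_locales (rule K1(1))
  obtain h where n: "n = 2*h+1" using assms(1) by (auto elim!: oddE)
  have zeta_eq: "cis (2 * pi / 2 ^ k) = zeta"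
  proof -
    have "(2::real) ^ k = 2 * 2 ^ K" unfolding K_def using assms(2)
      by (metis One_nat_def Suc_pred less_le_trans numeral_less_iff power_Suc semiring_norm(77) zero_less_numeral zero_less_one le_less_trans one_less_numeral_iff)
    thus ?thesis unfolding zeta_def MM_def by simp
  qed
  have gb: "cmod (\<Sum>x\<in>vecs n. zeta ^ (f x) * (-1) ^ (if ip u x then 1 else 0)) = 2 powr (real n / 2)"
    if "u \<in> vecs n" for u
    using assms(4) that unfolding gbent_def zeta_eq by blast
  show ?thesis unfolding plateaued_def K_def[symmetric]
  proof
    fix w assume w: "w \<in> vecs (n + K)"
    define u where "u = take n w"
    have u: "u \<in> vecs n" using w unfolding u_def vecs_def by auto
    define C where "C = {x\<in>vecs n. \<forall>i<K. digit f i x = drop n w ! i}"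
    have Wf: "walsh (n + K) (gray n k f) w = 2^K * (\<Sum>x\<in>C. sg (digit f K x) * sg (ip u x))"
      unfolding C_def u_def using walsh_gray[OF w, of k f] K_def by simp
    have vals: "walsh (n + K) (gray n k f) w \<in> {0, 2^(K+h), -(2^(K+h))}"
    proof (cases "C = {}")
      case True thus ?thesis using Wf by simp
    next
      case False
      then obtain x0 where x0: "x0 \<in> C" by blast
      have "C = {x\<in>vecs n. f x mod 2^K = f x0 mod 2^K}"
      proof -
        have "(\<forall>i<K. digit f i x = drop n w ! i) \<longleftrightarrow> f x mod 2^K = f x0 mod 2^K" for x
        proof -
          have "(\<forall>i<K. digit f i x = drop n w ! i) \<longleftrightarrow> (\<forall>i<K. digit f i x = digit f i x0)"
            using x0 unfolding C_def by auto
          also have "\<dots> \<longleftrightarrow> f x mod 2^K = f x0 mod 2^K" unfolding digit_def by (rule bits_mod)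
          finally show ?thesis .
        qed
        thus ?thesis unfolding C_def by auto
      qed
      hence "(\<Sum>x\<in>C. sg (digit f K x) * sg (ip u x)) = Ssum f n K u (f x0 mod 2^K)"
        unfolding Ssum_def by simp
      moreover have "f x0 mod 2^K < MM" unfolding MM_def by simp
      ultimately have "(\<Sum>x\<in>C. sg (digit f K x) * sg (ip u x)) \<in> {0, 2^h, -(2^h)}"
        using S_vals[OF n gb[OF u]] by simp
      thus ?thesis using Wf by (auto simp: power_add)
    qed
    have e: "(real (n + K) + real (k - 2)) / 2 = real (K + h)"
      using n K1 unfolding K_def by simp
    have "real_of_int (2^(K+h)) = 2 powr ((real (n + K) + real (k - 2)) / 2)"
      unfolding e using powr_realpow[of 2 "K+h"] by simp
    thus "real_of_int (walsh (n + K) (gray n k f) w) \<in>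
        {0, 2 powr ((real (n + K) + real (k - 2)) / 2), - (2 powr ((real (n + K) + real (k - 2)) / 2))}"
      using vals by auto
  qed
qed

end
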